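(* Let $\mathcal{C}$ be a small category and let $M,N$ be $k\mathcal{C}$-modules such that $\partial_0^*M\cong\partial_1^*N$ as $k\widetilde{\mathcal{E}}^{\mathcal{C}}_1$-modules, or such that $\partial_0^*M\cong\partial_1^*N$ as $k\widetilde{\mathcal{G}}^{\mathcal{C}}_1$-modules. Then $M$ and $N$ are locally constant.
   Context: A $k\mathcal{C}$-module is a functor to finite-dimensional $k$-vector spaces ($k$ a field); it is locally constant if it sends every morphism to an isomorphism; $F^*M=M\circ F$. $\widetilde{\mathcal{E}}^{\mathcal{C}}_1$ is the category whose objects are all morphisms $u:a\to b$ of $\mathcal{C}$ and whose morphisms $[u]\to[v]$ are commutative squares $(f_0,f_1)$ with $f_1u=vf_0$. $\widetilde{\mathcal{G}}^{\mathcal{C}}_1$ is its subcategory with the same objects whose morphisms $[u]\to[v]$ ($v:c\to d$) are the identities and the pairs $(w\circ u,\;v\circ w)$ for $w:b\to c$. In both, $\partial_0[u]=b$, $\partial_0(f_0,f_1)=f_1$, $\partial_1[u]=a$, $\partial_1(f_0,f_1)=f_0$. *)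

theory Defs
  imports "Jordan_Normal_Form.Matrix"
begin

(* A small category, given by a set of objects, a set of arrows,
   domain, codomain, identities and composition (Comp g f = g o f). *)
record ('o,'m) cat =
  Obj  :: "'o set"
  Arr  :: "'m set"
  Dom  :: "'m \<Rightarrow> 'o"
  Cod  :: "'m \<Rightarrow> 'o"
  Id   :: "'o \<Rightarrow> 'm"
  Comp :: "'m \<Rightarrow> 'm \<Rightarrow> 'm"

definition category :: "('o,'m) cat \<Rightarrow> bool" where
  "category C \<longleftrightarrow>
     (\<forall>f\<in>Arr C. Dom C f \<in> Obj C \<and> Cod C f \<in> Obj C) \<and>
     (\<forall>a\<in>Obj C. Id C a \<in> Arr C \<and> Dom C (Id C a) = a \<and> Cod C (Id C a) = a) \<and>
     (\<forall>f\<in>Arr C. \<forall>g\<in>Arr C. Cod C f = Dom C g \<longrightarrow>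
        Comp C g f \<in> Arr C \<and> Dom C (Comp C g f) = Dom C f \<and> Cod C (Comp C g f) = Cod C g) \<and>
     (\<forall>f\<in>Arr C. Comp C f (Id C (Dom C f)) = f \<and> Comp C (Id C (Cod C f)) f = f) \<and>
     (\<forall>f\<in>Arr C. \<forall>g\<in>Arr C. \<forall>h\<in>Arr C. Cod C f = Dom C g \<longrightarrow> Cod C g = Dom C h \<longrightarrow>
        Comp C h (Comp C g f) = Comp C (Comp C h g) f)"

(* A kC-module, i.e. a functor C -> finite-dimensional k-vector spaces, represented
   (up to isomorphism) via the skeleton k^n: object a |-> dimension d a,
   arrow f : a -> b |-> a (d b) x (d a) matrix M f. *)
definition kmodule :: "('o,'m) cat \<Rightarrow> ('o \<Rightarrow> nat) \<Rightarrow> ('m \<Rightarrow> 'k::field mat) \<Rightarrow> bool" where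
  "kmodule C d M \<longleftrightarrow>
     (\<forall>f\<in>Arr C. M f \<in> carrier_mat (d (Cod C f)) (d (Dom C f))) \<and>
     (\<forall>a\<in>Obj C. M (Id C a) = 1\<^sub>m (d a)) \<and>
     (\<forall>f\<in>Arr C. \<forall>g\<in>Arr C. Cod C f = Dom C g \<longrightarrow> M (Comp C g f) = M g * M f)"

definition iso_modules :: "('o,'m) cat \<Rightarrow> ('o \<Rightarrow> nat) \<Rightarrow> ('m \<Rightarrow> 'k::field mat)
    \<Rightarrow> ('o \<Rightarrow> nat) \<Rightarrow> ('m \<Rightarrow> 'k mat) \<Rightarrow> bool" where
  "iso_modules C d M d' M' \<longleftrightarrow>
     (\<exists>\<eta>. (\<forall>a\<in>Obj C. \<eta> a \<in> carrier_mat (d' a) (d a) \<and> invertible_mat (\<eta> a)) \<and>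
          (\<forall>f\<in>Arr C. \<eta> (Cod C f) * M f = M' f * \<eta> (Dom C f)))"

definition locally_constant :: "('o,'m) cat \<Rightarrow> ('m \<Rightarrow> 'k::field mat) \<Rightarrow> bool" where
  "locally_constant C M \<longleftrightarrow> (\<forall>f\<in>Arr C. invertible_mat (M f))"

(* The category E~_1^C: objects are the arrows u of C; an arrow [u] -> [v] is a
   commutative square (f0,f1), f1 u = v f0, encoded as the tuple (u, v, f0, f1). *)
definition E1 :: "('o,'m) cat \<Rightarrow> ('m, 'm \<times> 'm \<times> 'm \<times> 'm) cat" where
  "E1 C = \<lparr> Obj = Arr C,
            Arr = {(u, v, f0, f1) | u v f0 f1. u \<in> Arr C \<and> v \<in> Arr C \<and> f0 \<in> Arr C \<and> f1 \<in> Arr C \<and>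
                     Dom C f0 = Dom C u \<and> Cod C f0 = Dom C v \<and>
                     Dom C f1 = Cod C u \<and> Cod C f1 = Cod C v \<and>
                     Comp C f1 u = Comp C v f0},
            Dom = (\<lambda>(u, v, f0, f1). u),
            Cod = (\<lambda>(u, v, f0, f1). v),
            Id = (\<lambda>u. (u, u, Id C (Dom C u), Id C (Cod C u))),
            Comp = (\<lambda>(v', w, g0, g1) (u, v, f0, f1). (u, w, Comp C g0 f0, Comp C g1 f1)) \<rparr>"

definition G1 :: "('o,'m) cat \<Rightarrow> ('m, 'm \<times> 'm \<times> 'm \<times> 'm) cat" where
  "G1 C = (E1 C) \<lparr> Arr :=
            {Id (E1 C) u | u. u \<in> Arr C} \<union>
            {(u, v, Comp C w u, Comp C v w) | u v w. u \<in> Arr C \<and> v \<in> Arr C \<and> w \<in> Arr C \<and>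
                     Dom C w = Cod C u \<and> Cod C w = Dom C v} \<rparr>"

definition d0_ob :: "('o,'m) cat \<Rightarrow> 'm \<Rightarrow> 'o" where "d0_ob C u = Cod C u"
definition d0_ar :: "'m \<times> 'm \<times> 'm \<times> 'm \<Rightarrow> 'm" where "d0_ar = (\<lambda>(u, v, f0, f1). f1)"
definition d1_ob :: "('o,'m) cat \<Rightarrow> 'm \<Rightarrow> 'o" where "d1_ob C u = Dom C u"
definition d1_ar :: "'m \<times> 'm \<times> 'm \<times> 'm \<Rightarrow> 'm" where "d1_ar = (\<lambda>(u, v, f0, f1). f0)"

end

theory Submission
  imports Defs
begin

lemma inv_ex:
  fixes A :: "'k::field mat"
  assumes "invertible_mat A" "A \<in> carrier_mat n n"
  shows "\<exists>A'. A' \<in> carrier_mat n n \<and> A * A' = 1\<^sub>m n \<and> A' * A = 1\<^sub>m n"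
proof -
  have dr: "dim_row A = n" and dc: "dim_col A = n" using assms(2) by auto
  from assms(1) obtain B where B1: "A * B = 1\<^sub>m (dim_row A)" and B2: "B * A = 1\<^sub>m (dim_row B)"
    unfolding invertible_mat_def inverts_mat_def by blast
  have c: "dim_col B = n"
  proof -
    have "dim_col (A * B) = dim_col (1\<^sub>m (dim_row A))" using B1 by simp
    then show ?thesis using dr by simp
  qed
  have r: "dim_row B = n"
  proof -
    have "dim_col (B * A) = dim_col (1\<^sub>m (dim_row B))" using B2 by simp
    then show ?thesis using dc by simp
  qed
  have Bc: "B \<in> carrier_mat n n" using c r by (intro carrier_matI) auto
  show ?thesis
    by (rule exI[of _ B], intro conjI Bc) (use B1 B2 dr r in simp_all)
qed

lemma invI:
  fixes B :: "'k::field mat"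
  assumes "B \<in> carrier_mat n n" "B' \<in> carrier_mat n n" "B * B' = 1\<^sub>m n" "B' * B = 1\<^sub>m n"
  shows "invertible_mat B"
proof -
  have d: "dim_row B = n" "dim_col B = n" "dim_row B' = n" using assms(1,2) by auto
  have "inverts_mat B B'" "inverts_mat B' B" unfolding inverts_mat_def using assms(3,4) d by simp_all
  moreover have "square_mat B" using d by simp
  ultimately show ?thesis unfolding invertible_mat_def by blast
qed

lemma inv_left:
  fixes A B C :: "'k::field mat"
  assumes A: "A \<in> carrier_mat n n" and B: "B \<in> carrier_mat n n" and C: "C \<in> carrier_mat n n"
    and iA: "invertible_mat A" and iC: "invertible_mat C" and e: "A * B = C"
  shows "invertible_mat B"
proof -
  obtain A' where A': "A' \<in> carrier_mat n n" "A * A' = 1\<^sub>m n" "A' * A = 1\<^sub>m n"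
    using inv_ex[OF iA A] by blast
  obtain C' where C': "C' \<in> carrier_mat n n" "C * C' = 1\<^sub>m n" "C' * C = 1\<^sub>m n"
    using inv_ex[OF iC C] by blast
  have Bq: "B = A' * C"
  proof -
    have "A' * C = A' * (A * B)" using e by simp
    also have "\<dots> = (A' * A) * B" by (rule assoc_mult_mat[OF A'(1) A B, symmetric])
    also have "\<dots> = B" using A'(3) B by simp
    finally show ?thesis by simp
  qed
  have 1: "B * (C' * A) = 1\<^sub>m n"
  proof -
    have "B * (C' * A) = (B * C') * A" by (rule assoc_mult_mat[OF B C'(1) A, symmetric])
    also have "B * C' = A' * (C * C')" unfolding Bq by (rule assoc_mult_mat[OF A'(1) C C'(1)])
    also have "\<dots> = A'" using C'(2) A'(1) by simp
    finally show ?thesis using A'(3) by simp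
  qed
  have 2: "(C' * A) * B = 1\<^sub>m n"
  proof -
    have "(C' * A) * B = C' * (A * B)" by (rule assoc_mult_mat[OF C'(1) A B])
    also have "\<dots> = 1\<^sub>m n" using e C'(3) by simp
    finally show ?thesis .
  qed
  have CA: "C' * A \<in> carrier_mat n n" using A C'(1) by simp
  show ?thesis by (rule invI[OF B CA 1 2])
qed

lemma inv_right:
  fixes A B C :: "'k::field mat"
  assumes A: "A \<in> carrier_mat n n" and B: "B \<in> carrier_mat n n" and C: "C \<in> carrier_mat n n"
    and iA: "invertible_mat A" and iC: "invertible_mat C" and e: "C = B * A"
  shows "invertible_mat B"
proof -
  obtain A' where A': "A' \<in> carrier_mat n n" "A * A' = 1\<^sub>m n" "A' * A = 1\<^sub>m n"
    using inv_ex[OF iA A] by blast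
  obtain C' where C': "C' \<in> carrier_mat n n" "C * C' = 1\<^sub>m n" "C' * C = 1\<^sub>m n"
    using inv_ex[OF iC C] by blast
  have Bq: "B = C * A'"
  proof -
    have "C * A' = (B * A) * A'" using e by simp
    also have "\<dots> = B * (A * A')" by (rule assoc_mult_mat[OF B A A'(1)])
    also have "\<dots> = B" using A'(2) B by simp
    finally show ?thesis by simp
  qed
  have 1: "B * (A * C') = 1\<^sub>m n"
  proof -
    have "B * (A * C') = (B * A) * C'" by (rule assoc_mult_mat[OF B A C'(1), symmetric])
    also have "\<dots> = 1\<^sub>m n" using e C'(2) by simp
    finally show ?thesis .
  qed
  have 2: "(A * C') * B = 1\<^sub>m n"
  proof -
    have "(A * C') * B = A * (C' * B)" by (rule assoc_mult_mat[OF A C'(1) B])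
    also have "C' * B = (C' * C) * A'" unfolding Bq by (rule assoc_mult_mat[OF C'(1) C A'(1), symmetric])
    also have "\<dots> = A'" using C'(3) A'(1) by simp
    finally show ?thesis using A'(2) by simp
  qed
  have AC: "A * C' \<in> carrier_mat n n" using A C'(1) by simp
  show ?thesis by (rule invI[OF B AC 1 2])
qed

lemma cat_facts:
  assumes "category C"
  shows "\<And>f. f \<in> Arr C \<Longrightarrow> Dom C f \<in> Obj C \<and> Cod C f \<in> Obj C"
    "\<And>a. a \<in> Obj C \<Longrightarrow> Id C a \<in> Arr C \<and> Dom C (Id C a) = a \<and> Cod C (Id C a) = a"
    "\<And>f. f \<in> Arr C \<Longrightarrow> Comp C f (Id C (Dom C f)) = f \<and> Comp C (Id C (Cod C f)) f = f"
  using assms unfolding category_def by blast+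

lemma core:
  fixes C :: "('o,'m) cat" and D :: "('m, 'm \<times> 'm \<times> 'm \<times> 'm) cat"
    and dM dN :: "'o \<Rightarrow> nat"
    and M N :: "'m \<Rightarrow> 'k::field mat"
  assumes cat: "category C"
    and kM: "kmodule C dM M" and kN: "kmodule C dN N"
    and ob: "Obj D = Arr C" and dom: "Dom D = (\<lambda>(u, v, f0, f1). u)"
    and cod: "Cod D = (\<lambda>(u, v, f0, f1). v)"
    and a1: "\<And>f. f \<in> Arr C \<Longrightarrow> (f, Id C (Cod C f), f, Id C (Cod C f)) \<in> Arr D"
    and a2: "\<And>f. f \<in> Arr C \<Longrightarrow> (Id C (Dom C f), f, Id C (Dom C f), f) \<in> Arr D"
    and iso: "iso_modules D (dM \<circ> d0_ob C) (M \<circ> d0_ar) (dN \<circ> d1_ob C) (N \<circ> d1_ar)"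
  shows "locally_constant C M \<and> locally_constant C N"
proof -
  obtain \<eta> where E1: "\<forall>a\<in>Obj D. \<eta> a \<in> carrier_mat ((dN \<circ> d1_ob C) a) ((dM \<circ> d0_ob C) a) \<and> invertible_mat (\<eta> a)"
    and E2: "\<forall>g\<in>Arr D. \<eta> (Cod D g) * (M \<circ> d0_ar) g = (N \<circ> d1_ar) g * \<eta> (Dom D g)"
    using iso unfolding iso_modules_def by blast
  have eta: "\<eta> a \<in> carrier_mat (dN (Dom C a)) (dM (Cod C a)) \<and> invertible_mat (\<eta> a)"
    if "a \<in> Arr C" for a
  proof -
    have "a \<in> Obj D" using ob that by simp
    from bspec[OF E1 this] show ?thesis by (simp add: d0_ob_def d1_ob_def)
  qed
  have nat: "\<eta> (Cod D g) * M (d0_ar g) = N (d1_ar g) * \<eta> (Dom D g)" if "g \<in> Arr D" for g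
    using bspec[OF E2 that] by simp
  have sq: "r = c" if "A \<in> carrier_mat r c" "invertible_mat A" for A :: "'k mat" and r c
  proof -
    from that(2) have "dim_row A = dim_col A" unfolding invertible_mat_def square_mat.simps by simp
    with that(1) show ?thesis by auto
  qed
  have "invertible_mat (M f) \<and> invertible_mat (N f)" if f: "f \<in> Arr C" for f
  proof -
    define x where "x = Dom C f"
    define y where "y = Cod C f"
    have x: "x \<in> Obj C" and y: "y \<in> Obj C" using cat_facts(1)[OF cat f] unfolding x_def y_def by auto
    have ix: "Id C x \<in> Arr C" "Dom C (Id C x) = x" "Cod C (Id C x) = x"
      using cat_facts(2)[OF cat x] by auto
    have iy: "Id C y \<in> Arr C" "Dom C (Id C y) = y" "Cod C (Id C y) = y"
      using cat_facts(2)[OF cat y] by auto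
    have ef: "\<eta> f \<in> carrier_mat (dN x) (dM y)" "invertible_mat (\<eta> f)"
      using eta[OF f] unfolding x_def y_def by auto
    have ex: "\<eta> (Id C x) \<in> carrier_mat (dN x) (dM x)" "invertible_mat (\<eta> (Id C x))"
      using eta[OF ix(1)] ix by auto
    have ey: "\<eta> (Id C y) \<in> carrier_mat (dN y) (dM y)" "invertible_mat (\<eta> (Id C y))"
      using eta[OF iy(1)] iy by auto
    have Mf: "M f \<in> carrier_mat (dM y) (dM x)" and Nf: "N f \<in> carrier_mat (dN y) (dN x)"
      using kM kN f unfolding kmodule_def x_def y_def by blast+
    have Mi: "M (Id C y) = 1\<^sub>m (dM y)" and Ni: "N (Id C x) = 1\<^sub>m (dN x)"
      using kM kN x y unfolding kmodule_def by blast+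
    have e1: "\<eta> (Id C y) * M (Id C y) = N f * \<eta> f"
      using nat[OF a1[OF f]] unfolding dom cod d0_ar_def d1_ar_def y_def by simp
    have e2: "\<eta> f * M f = N (Id C x) * \<eta> (Id C x)"
      using nat[OF a2[OF f]] unfolding dom cod d0_ar_def d1_ar_def x_def by simp
    have d1: "dN x = dM y" using sq[OF ef] .
    have d2: "dN x = dM x" using sq[OF ex] .
    have d3: "dN y = dM y" using sq[OF ey] .
    have e1': "\<eta> (Id C y) = N f * \<eta> f" using e1 Mi ey(1) by simp
    have e2': "\<eta> f * M f = \<eta> (Id C x)" using e2 Ni ex(1) by simp
    have "invertible_mat (M f)"
      by (rule inv_left[OF _ _ _ ef(2) ex(2) e2', of "dM y"]) (use ef(1) Mf ex(1) d1 d2 in auto)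
    moreover have "invertible_mat (N f)"
      by (rule inv_right[OF _ _ _ ef(2) ey(2) e1', of "dM y"]) (use ef(1) Nf ey(1) d1 d3 in auto)
    ultimately show ?thesis ..
  qed
  then show ?thesis unfolding locally_constant_def by auto
qed

theorem lemma3p9:
  fixes C :: "('o,'m) cat"
    and dM dN :: "'o \<Rightarrow> nat"
    and M N :: "'m \<Rightarrow> 'k::field mat"
  assumes "category C"
    and "kmodule C dM M" and "kmodule C dN N"
    and "iso_modules (E1 C) (dM \<circ> d0_ob C) (M \<circ> d0_ar) (dN \<circ> d1_ob C) (N \<circ> d1_ar)
         \<or> iso_modules (G1 C) (dM \<circ> d0_ob C) (M \<circ> d0_ar) (dN \<circ> d1_ob C) (N \<circ> d1_ar)"
  shows "locally_constant C M \<and> locally_constant C N"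
proof -
  have cat: "category C" by fact
  have facts: "\<And>f. f \<in> Arr C \<Longrightarrow> Dom C f \<in> Obj C \<and> Cod C f \<in> Obj C"
    "\<And>a. a \<in> Obj C \<Longrightarrow> Id C a \<in> Arr C \<and> Dom C (Id C a) = a \<and> Cod C (Id C a) = a"
    "\<And>f. f \<in> Arr C \<Longrightarrow> Comp C f (Id C (Dom C f)) = f \<and> Comp C (Id C (Cod C f)) f = f"
    using cat_facts[OF cat] by blast+
  have idid: "Comp C (Id C a) (Id C a) = Id C a" if a: "a \<in> Obj C" for a
  proof -
    have "Id C a \<in> Arr C" "Dom C (Id C a) = a" using facts(2)[OF a] by auto
    then show ?thesis using facts(3)[of "Id C a"] by simp
  qed
  have E1a: "(f, Id C (Cod C f), f, Id C (Cod C f)) \<in> Arr (E1 C)"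
    and E1b: "(Id C (Dom C f), f, Id C (Dom C f), f) \<in> Arr (E1 C)" if f: "f \<in> Arr C" for f
  proof -
    have x: "Dom C f \<in> Obj C" and y: "Cod C f \<in> Obj C" using facts(1)[OF f] by auto
    note ix = facts(2)[OF x] and iy = facts(2)[OF y] and cf = facts(3)[OF f]
    show "(f, Id C (Cod C f), f, Id C (Cod C f)) \<in> Arr (E1 C)"
      unfolding E1_def using f ix iy cf by simp
    show "(Id C (Dom C f), f, Id C (Dom C f), f) \<in> Arr (E1 C)"
      unfolding E1_def using f ix iy cf by simp
  qed
  have G1a: "(f, Id C (Cod C f), f, Id C (Cod C f)) \<in> Arr (G1 C)" if f: "f \<in> Arr C" for f
  proof -
    have c: "Cod C f \<in> Obj C" using facts(1)[OF f] by auto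
    have "(f, Id C (Cod C f), Comp C (Id C (Cod C f)) f, Comp C (Id C (Cod C f)) (Id C (Cod C f))) \<in> Arr (G1 C)"
      unfolding G1_def using f facts(2)[OF c] by auto
    then show ?thesis using facts(3)[OF f] idid[OF c] by simp
  qed
  have G1b: "(Id C (Dom C f), f, Id C (Dom C f), f) \<in> Arr (G1 C)" if f: "f \<in> Arr C" for f
  proof -
    have c: "Dom C f \<in> Obj C" using facts(1)[OF f] by auto
    have "(Id C (Dom C f), f, Comp C (Id C (Dom C f)) (Id C (Dom C f)), Comp C f (Id C (Dom C f))) \<in> Arr (G1 C)"
      unfolding G1_def using f facts(2)[OF c] by auto
    then show ?thesis using facts(3)[OF f] idid[OF c] by simp
  qed
  from assms(4) show ?thesis
  proof
    assume i: "iso_modules (E1 C) (dM \<circ> d0_ob C) (M \<circ> d0_ar) (dN \<circ> d1_ob C) (N \<circ> d1_ar)"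
    show ?thesis by (rule core[OF cat assms(2,3) _ _ _ E1a E1b i]) (simp_all add: E1_def)
  next
    assume i: "iso_modules (G1 C) (dM \<circ> d0_ob C) (M \<circ> d0_ar) (dN \<circ> d1_ob C) (N \<circ> d1_ar)"
    show ?thesis by (rule core[OF cat assms(2,3) _ _ _ G1a G1b i]) (simp_all add: G1_def E1_def)
  qed
qed

end
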